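(* Let $G_1,\dots,G_K$ be a partition of $[n]$ with $n_k=|G_k|\ge1$, indexed so that $G_k$ consists of consecutive indices, and let $r\ge K$. Let $U^\ast\in\mathbb R^{n\times r}$ have $U^\ast_{is}=1/\sqrt{n_s}$ if $s\le K$ and $i\in G_s$, and $U^\ast_{is}=0$ otherwise, and let $Z^\ast=U^\ast{U^\ast}^T$. Then every $U\in\mathbb R^{n\times r}$ with $UU^T=Z^\ast$ and $U\ge0$ entrywise has, up to a permutation of its columns, the block form $$U=\begin{bmatrix} a_{1,1}\mathbf 1_{n_1},\dots,a_{1,m_1}\mathbf 1_{n_1} & 0&\cdots&0\\ 0& a_{2,1}\mathbf 1_{n_2},\dots,a_{2,m_2}\mathbf 1_{n_2}&\cdots&0\\ \vdots&\vdots&\ddots&\vdots\\ 0&0&\cdots& a_{K,1}\mathbf 1_{n_K},\dots,a_{K,m_K}\mathbf 1_{n_K}\end{bmatrix}$$ for some block sizes $m_k\ge1$ with $\sum_k m_k=r$ and weights $a_{k,\ell}\ge0$ with $\sum_{\ell}a_{k,\ell}^2=1/n_k$ for all $k\in[K]$.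
   Context: $\mathbf 1_{n_k}$ denotes the all-ones vector of length $n_k$; inequalities between matrices are entrywise. *)

theory Defs
  imports "HOL-Analysis.Analysis"
begin

text \<open>Indices are 0-based: rows i < n, columns s < r, clusters k < K.
  The partition into consecutive blocks is given by the sizes nk k (k < K);
  block k is the index interval starting at blk_off nk k of length nk k.\<close>

definition blk_off :: "(nat \<Rightarrow> nat) \<Rightarrow> nat \<Rightarrow> nat" where
  "blk_off nk k = (\<Sum>j<k. nk j)"

definition in_blk :: "(nat \<Rightarrow> nat) \<Rightarrow> nat \<Rightarrow> nat \<Rightarrow> bool" where
  "in_blk nk k i \<longleftrightarrow> blk_off nk k \<le> i \<and> i < blk_off nk k + nk k"

definition Ustar :: "nat \<Rightarrow> (nat \<Rightarrow> nat) \<Rightarrow> nat \<Rightarrow> nat \<Rightarrow> real" where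
  "Ustar K nk i s = (if s < K \<and> in_blk nk s i then 1 / sqrt (real (nk s)) else 0)"

definition Zstar :: "nat \<Rightarrow> nat \<Rightarrow> (nat \<Rightarrow> nat) \<Rightarrow> nat \<Rightarrow> nat \<Rightarrow> real" where
  "Zstar r K nk i j = (\<Sum>s<r. Ustar K nk i s * Ustar K nk j s)"

end

theory Submission
  imports Defs
begin

lemma off_mono:
  assumes "k < k'" shows "blk_off nk k + nk k \<le> blk_off nk k'"
proof -
  have "blk_off nk k + nk k = (\<Sum>j<Suc k. nk j)" by (simp add: blk_off_def)
  also have "\<dots> \<le> (\<Sum>j<k'. nk j)" by (rule sum_mono2) (use assms in auto)
  finally show ?thesis by (simp add: blk_off_def)
qed

lemma blk_unique: assumes "in_blk nk k i" "in_blk nk k' i" shows "k = k'"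
proof (rule ccontr)
  assume "k \<noteq> k'"
  then consider "k < k'" | "k' < k" by linarith
  then show False
  proof cases
    case 1 then show False using off_mono[OF 1, of nk] assms by (simp add: in_blk_def)
  next
    case 2 then show False using off_mono[OF 2, of nk] assms by (simp add: in_blk_def)
  qed
qed

lemma blk_exists: "i < blk_off nk K \<Longrightarrow> \<exists>k<K. in_blk nk k i"
proof (induction K)
  case 0 then show ?case by (simp add: blk_off_def)
next
  case (Suc K)
  show ?case
  proof (cases "i < blk_off nk K")
    case True then show ?thesis using Suc.IH less_Suc_eq by blast
  next
    case False
    then have "in_blk nk K i" using Suc.prems by (simp add: in_blk_def blk_off_def)
    then show ?thesis by blast
  qed
qed

lemma blk_lt: "k < K \<Longrightarrow> in_blk nk k i \<Longrightarrow> i < blk_off nk K"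
  using off_mono[of k K nk] by (simp add: in_blk_def)

lemma Zstar_eq:
  assumes "K \<le> r" "k < K" "in_blk nk k i"
  shows "Zstar r K nk i j = (if in_blk nk k j then 1 / real (nk k) else 0)"
proof -
  have U: "Ustar K nk i s = (if s = k then 1 / sqrt (real (nk k)) else 0)" for s
  proof (cases "s = k")
    case True then show ?thesis using assms by (simp add: Ustar_def)
  next
    case False
    then have "\<not> in_blk nk s i" using blk_unique[of nk s i k] assms(3) by blast
    then show ?thesis using False by (simp add: Ustar_def)
  qed
  have "Zstar r K nk i j = (\<Sum>s<r. if s = k then 1 / sqrt (real (nk k)) * Ustar K nk j k else 0)"
    unfolding Zstar_def by (rule sum.cong) (simp_all only: U, simp)
  also have "\<dots> = 1 / sqrt (real (nk k)) * Ustar K nk j k"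
    using assms by (simp only: sum.delta finite_lessThan) simp
  also have "\<dots> = (if in_blk nk k j then 1 / real (nk k) else 0)"
    using assms by (simp add: Ustar_def)
  finally show ?thesis .
qed

theorem theorem4:
  fixes n r K :: nat and nk :: "nat \<Rightarrow> nat" and U :: "nat \<Rightarrow> nat \<Rightarrow> real"
  assumes "1 \<le> K"
    and "\<forall>k<K. 1 \<le> nk k"
    and "n = (\<Sum>k<K. nk k)"
    and "K \<le> r"
    and "\<forall>i<n. \<forall>j<n. (\<Sum>s<r. U i s * U j s) = Zstar r K nk i j"
    and "\<forall>i<n. \<forall>s<r. 0 \<le> U i s"
  shows "\<exists>\<sigma> m a.
           \<sigma> permutes {..<r} \<and>
           (\<forall>k<K. 1 \<le> m k) \<and> (\<Sum>k<K. m k) = r \<and>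
           (\<forall>k<K. \<forall>l<m k. 0 \<le> a k l) \<and>
           (\<forall>k<K. (\<Sum>l<m k. (a k l)\<^sup>2) = 1 / real (nk k)) \<and>
           (\<forall>k<K. \<forall>l<m k. \<forall>i<n.
              U i (\<sigma> ((\<Sum>j<k. m j) + l)) = (if in_blk nk k i then a k l else 0))"
proof -
  have nK: "n = blk_off nk K" using assms(3) by (simp add: blk_off_def)
  define bo where "bo i = (THE k. k<K \<and> in_blk nk k i)" for i
  have bo: "bo i < K \<and> in_blk nk (bo i) i" if "i < n" for i
  proof -
    have "\<exists>!k. k<K \<and> in_blk nk k i" using blk_exists[of i nk K] that nK blk_unique by blast
    then show ?thesis unfolding bo_def by (rule theI')
  qed
  have bo_eq: "bo i = k" if "k < K" "in_blk nk k i" for k i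
    using bo[of i] blk_lt[OF that] nK that blk_unique by metis
  have blk_iff: "bo i = k \<longleftrightarrow> in_blk nk k i" if "k < K" "i < n" for i k
    using bo[OF that(2)] bo_eq[OF that(1)] by metis
  have Z: "(\<Sum>s<r. U i s * U j s) = (if bo i = bo j then 1 / real (nk (bo i)) else 0)"
    if "i < n" "j < n" for i j
  proof -
    have bi: "bo i < K" "in_blk nk (bo i) i" using bo[OF that(1)] by auto
    have "Zstar r K nk i j = (if in_blk nk (bo i) j then 1 / real (nk (bo i)) else 0)"
      by (rule Zstar_eq[OF assms(4) bi])
    moreover have "in_blk nk (bo i) j \<longleftrightarrow> bo j = bo i" using blk_iff[OF bi(1) that(2)] by simp
    ultimately show ?thesis using assms(5) that by auto
  qed
  have orth: "U i s * U j s = 0" if "i < n" "j < n" "bo i \<noteq> bo j" "s < r" for i j s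
  proof -
    have z: "(\<Sum>s<r. U i s * U j s) = 0" using Z[OF that(1,2)] that(3) by simp
    have nn: "0 \<le> U i s' * U j s'" if "s' \<in> {..<r}" for s'
      using assms(6) that \<open>i < n\<close> \<open>j < n\<close> by (simp add: mult_nonneg_nonneg)
    have "\<forall>s'\<in>{..<r}. U i s' * U j s' = 0"
      using sum_nonneg_eq_0_iff[of "{..<r}" "\<lambda>s'. U i s' * U j s'"] nn z by blast
    then show ?thesis using that(4) by simp
  qed
  have same: "U i s = U j s" if "i < n" "j < n" "bo i = bo j" "s < r" for i j s
  proof -
    have e: "\<And>s. (U i s - U j s)^2 = U i s * U i s + U j s * U j s - 2 * (U i s * U j s)"
      by (simp add: power2_eq_square algebra_simps)
    have "(\<Sum>s<r. (U i s - U j s)^2) = (\<Sum>s<r. U i s * U i s) + (\<Sum>s<r. U j s * U j s) - 2 * (\<Sum>s<r. U i s * U j s)"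
      by (simp only: e sum_subtractf sum.distrib sum_distrib_left)
    also have "\<dots> = 0" using Z[OF that(1,1)] Z[OF that(2,2)] Z[OF that(1,2)] that(3) by simp
    finally have z: "(\<Sum>s<r. (U i s - U j s)^2) = 0" .
    have nn: "0 \<le> (U i s' - U j s')^2" if "s' \<in> {..<r}" for s' by simp
    have "\<forall>s'\<in>{..<r}. (U i s' - U j s')^2 = 0"
      using sum_nonneg_eq_0_iff[of "{..<r}" "\<lambda>s'. (U i s' - U j s')^2"] nn z by blast
    then show ?thesis using that(4) by simp
  qed
  define nz where "nz s \<longleftrightarrow> (\<exists>i<n. U i s \<noteq> 0)" for s
  define lab where "lab s = (if nz s then bo (SOME i. i<n \<and> U i s \<noteq> 0) else 0)" for s
  have lab_lt: "lab s < K" for s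
  proof (cases "nz s")
    case True
    then have "(SOME i. i<n \<and> U i s \<noteq> 0) < n" unfolding nz_def by (rule someI2_ex) auto
    then show ?thesis using True bo unfolding lab_def by auto
  qed (use assms(1) lab_def in auto)
  have lab_key: "lab s = bo i" if "s < r" "i < n" "U i s \<noteq> 0" for s i
  proof -
    define i0 where "i0 = (SOME i. i<n \<and> U i s \<noteq> 0)"
    have "i0 < n \<and> U i0 s \<noteq> 0" unfolding i0_def by (rule someI) (use that in auto)
    moreover have "nz s" using that nz_def by auto
    ultimately have "bo i0 = bo i" using orth[of i i0 s] that by (metis mult_eq_0_iff)
    then show ?thesis using \<open>nz s\<close> unfolding lab_def i0_def[symmetric] by simp
  qed
  have offlt: "blk_off nk k < n \<and> bo (blk_off nk k) = k" if "k < K" for k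
  proof -
    have "in_blk nk k (blk_off nk k)" using assms(2) that by (auto simp: in_blk_def)
    then show ?thesis using blk_lt[OF that] nK bo_eq[OF that] by auto
  qed
  have col: "U i s = (if bo i = lab s then U (blk_off nk (lab s)) s else 0)" if "s < r" "i < n" for s i
  proof (cases "bo i = lab s")
    case True
    then show ?thesis using same[of i "blk_off nk (lab s)" s] offlt[OF lab_lt] that by auto
  next
    case False
    then show ?thesis using lab_key[OF that] by auto
  qed
  define S where "S k = {s. s<r \<and> lab s = k}" for k
  define m where "m k = card (S k)" for k
  have finS: "finite (S k)" for k unfolding S_def by auto
  have "\<forall>k. \<exists>h. bij_betw h {..<m k} (S k)"
    using ex_bij_betw_nat_finite[OF finS] unfolding m_def by (metis atLeast0LessThan)
  then obtain E where E: "\<And>k. bij_betw (E k) {..<m k} (S k)" by metis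
  have sum_m: "(\<Sum>k<K. m k) = r"
  proof -
    have "(\<Sum>k<K. m k) = card (\<Union>k<K. S k)"
      unfolding m_def by (rule card_UN_disjoint[symmetric]) (auto simp: finS S_def)
    also have "(\<Union>k<K. S k) = {..<r}" using lab_lt by (auto simp: S_def)
    finally show ?thesis by simp
  qed
  define \<phi> where "\<phi> = (\<lambda>(k,l). blk_off m k + l)"
  define T where "T = Sigma {..<K} (\<lambda>k. {..<m k})"
  have cardT: "card T = r" unfolding T_def using sum_m by (simp add: card_SigmaI)
  have finT: "finite T" unfolding T_def by auto
  have bijI: "bij_betw f T {..<r}" if "inj_on f T" "f ` T \<subseteq> {..<r}" for f
  proof -
    have "card (f ` T) = r" using card_image[OF that(1)] cardT by simp
    then have "f ` T = {..<r}" using card_subset_eq[OF _ that(2)] by simp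
    then show ?thesis using that(1) by (simp add: bij_betw_def)
  qed
  have bphi: "bij_betw \<phi> T {..<r}"
  proof (rule bijI)
    show "inj_on \<phi> T"
    proof (rule inj_onI)
      fix x y assume xy: "x \<in> T" "y \<in> T" "\<phi> x = \<phi> y"
      obtain k l where x: "x = (k,l)" "k<K" "l < m k" using xy(1) T_def by auto
      obtain k' l' where y: "y = (k',l')" "k'<K" "l' < m k'" using xy(2) T_def by auto
      have e: "blk_off m k + l = blk_off m k' + l'" using xy(3) x y \<phi>_def by simp
      have "\<not> k < k'" using off_mono[of k k' m] e x y by linarith
      moreover have "\<not> k' < k" using off_mono[of k' k m] e x y by linarith
      ultimately show "x = y" using e x y by simp
    qed
    show "\<phi> ` T \<subseteq> {..<r}"
    proof
      fix p assume "p \<in> \<phi> ` T"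
      then obtain k l where "p = blk_off m k + l" "k<K" "l < m k" using T_def \<phi>_def by auto
      then show "p \<in> {..<r}" using off_mono[of k K m] sum_m by (simp add: blk_off_def)
    qed
  qed
  define \<Psi> where "\<Psi> = (\<lambda>(k,l). E k l)"
  have ES: "E k l \<in> S k" if "l < m k" for k l using E[of k] that bij_betwE by blast
  have bpsi: "bij_betw \<Psi> T {..<r}"
  proof (rule bijI)
    show "inj_on \<Psi> T"
    proof (rule inj_onI)
      fix x y assume xy: "x \<in> T" "y \<in> T" "\<Psi> x = \<Psi> y"
      obtain k l where x: "x = (k,l)" "k<K" "l < m k" using xy(1) T_def by auto
      obtain k' l' where y: "y = (k',l')" "k'<K" "l' < m k'" using xy(2) T_def by auto
      have e: "E k l = E k' l'" using xy(3) x y \<Psi>_def by simp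
      have "k = k'" using ES[OF x(3)] ES[OF y(3)] e by (simp add: S_def)
      then show "x = y" using e x y E[of k] by (auto simp: bij_betw_def inj_on_def)
    qed
    show "\<Psi> ` T \<subseteq> {..<r}" using ES by (auto simp: T_def \<Psi>_def S_def)
  qed
  define \<sigma> where "\<sigma> p = (if p < r then \<Psi> (inv_into T \<phi> p) else p)" for p
  have "bij_betw (\<Psi> \<circ> inv_into T \<phi>) {..<r} {..<r}"
    using bij_betw_trans[OF bij_betw_inv_into[OF bphi] bpsi] .
  then have "bij_betw \<sigma> {..<r} {..<r}"
    by (rule bij_betw_cong[THEN iffD1, rotated]) (auto simp: \<sigma>_def)
  then have perm: "\<sigma> permutes {..<r}"
    by (rule bij_imp_permutes) (auto simp: \<sigma>_def)
  have sig: "\<sigma> ((\<Sum>j<k. m j) + l) = E k l" if "k < K" "l < m k" for k l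
  proof -
    have "(k,l) \<in> T" using that T_def by auto
    then have "\<phi> (k,l) < r" "inv_into T \<phi> (\<phi> (k,l)) = (k,l)"
      using bphi bij_betwE inv_into_f_f bij_betw_imp_inj_on by (blast, metis)
    then show ?thesis by (simp add: \<sigma>_def \<phi>_def blk_off_def \<Psi>_def)
  qed
  define a where "a k l = U (blk_off nk k) (E k l)" for k l
  show ?thesis
  proof (intro exI conjI allI impI)
    show "\<sigma> permutes {..<r}" by (rule perm)
    show "(\<Sum>k<K. m k) = r" by (rule sum_m)
  next
    fix k assume k: "k < K"
    let ?o = "blk_off nk k"
    have o: "?o < n" "bo ?o = k" using offlt[OF k] by blast+
    have sq: "(\<Sum>s<r. U ?o s * U ?o s) = 1 / real (nk k)" using Z[OF o(1) o(1)] o(2) by presburger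
    have "nk k \<ge> 1" using assms(2) k by blast
    then have sqnz: "(\<Sum>s<r. U ?o s * U ?o s) \<noteq> 0" unfolding sq by simp
    have "\<exists>s<r. U ?o s \<noteq> 0"
    proof (rule ccontr)
      assume "\<not> (\<exists>s<r. U ?o s \<noteq> 0)"
      then have "(\<Sum>s<r. U ?o s * U ?o s) = 0" by (intro sum.neutral) auto
      then show False using sqnz by blast
    qed
    then obtain s where s: "s < r" "U ?o s \<noteq> 0" by blast
    have "lab s = k" using lab_key[OF s(1) o(1) s(2)] o(2) by simp
    then have "s \<in> S k" using s(1) unfolding S_def by blast
    then have "S k \<noteq> {}" by blast
    then show "1 \<le> m k" unfolding m_def using finS[of k] card_gt_0_iff[of "S k"] by linarith
    have "(\<Sum>l<m k. (a k l)\<^sup>2) = (\<Sum>s\<in>S k. (U ?o s)\<^sup>2)"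
      unfolding a_def by (rule sum.reindex_bij_betw[OF E])
    also have "\<dots> = (\<Sum>s<r. (U ?o s)\<^sup>2)"
    proof (rule sum.mono_neutral_left)
      show "finite {..<r}" by simp
      show "S k \<subseteq> {..<r}" unfolding S_def by blast
      show "\<forall>i\<in>{..<r} - S k. (U (blk_off nk k) i)\<^sup>2 = 0"
      proof
        fix s assume "s \<in> {..<r} - S k"
        then have s1: "s < r" and s2: "lab s \<noteq> k" unfolding S_def by auto
        have "U ?o s = (if bo ?o = lab s then U (blk_off nk (lab s)) s else 0)"
          by (rule col[OF s1 o(1)])
        also have "\<dots> = 0" using s2 o(2) by auto
        finally show "(U ?o s)\<^sup>2 = 0" by simp
      qed
    qed
    also have "\<dots> = 1 / real (nk k)" unfolding sq[symmetric] power2_eq_square ..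
    finally show "(\<Sum>l<m k. (a k l)\<^sup>2) = 1 / real (nk k)" .
  next
    fix k l assume "k < K" "l < m k"
    then have "blk_off nk k < n" "E k l < r" using offlt ES unfolding S_def by blast+
    then show "0 \<le> a k l" using assms(6) unfolding a_def by blast
  next
    fix k l i assume kl: "k < K" "l < m k" "i < n"
    have s: "E k l < r" "lab (E k l) = k" using ES[OF kl(2)] by (auto simp: S_def)
    show "U i (\<sigma> ((\<Sum>j<k. m j) + l)) = (if in_blk nk k i then a k l else 0)"
    proof -
      have "U i (\<sigma> ((\<Sum>j<k. m j) + l)) = U i (E k l)" using sig[OF kl(1,2)] by simp
      also have "\<dots> = (if bo i = lab (E k l) then U (blk_off nk (lab (E k l))) (E k l) else 0)"
        by (rule col[OF s(1) kl(3)])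
      also have "\<dots> = (if in_blk nk k i then a k l else 0)"
        unfolding s(2) blk_iff[OF kl(1,3)] a_def ..
      finally show ?thesis .
    qed
  qed
qed

end
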